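(* Let $G=(V,E,C,\ell)$ be an edge-labeled hypergraph with $C=\{1,\dots,k\}$, $k\ge 2$, and maximum hyperedge size $r\ge 2$. Let $(x_v^c,x_e)$ be an optimal solution of the linear program \[ \min \sum_{e\in E} x_e \quad\text{s.t.}\quad \sum_{c=1}^k x_v^c=k-1\ \ \forall v\in V;\qquad x_v^c\le x_e\ \ \forall c\in C,\ \forall e\in E\text{ with }\ell(e)=c,\ \forall v\in e;\qquad 0\le x_v^c\le 1,\ 0\le x_e\le 1. \] Given a parameter $t\in[1/2,2/3]$, define a random clustering $Y$ as follows: draw a uniformly random permutation of $C$, regarded as a priority order on the categories; for each $c$ let $S_c=\{v\in V: x_v^c<t\}$; each node $v$ belonging to at least one $S_c$ is assigned to the highest-priority category $c$ with $v\in S_c$; every node lying in no $S_c$ is assigned to an arbitrary category. Then: if $t=k/(2k-1)$, $\mathbb{E}[\mathrm{CatEdgeClus}(Y)]\le (2-1/k)\cdot\min_{Y'}\mathrm{CatEdgeClus}(Y')$; and if $t=(r+1)/(2r+1)$, $\mathbb{E}[\mathrm{CatEdgeClus}(Y)]\le (2-1/(r+1))\cdot\min_{Y'}\mathrm{CatEdgeClus}(Y')$, where the minima range over all clusterings $Y':V\to C$.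
   Context: An edge-labeled hypergraph $G=(V,E,C,\ell)$ consists of a finite node set $V$, a finite collection $E$ of hyperedges (nonempty subsets of $V$), a finite set $C$ of categories, and a labeling $\ell:E\to C$; the maximum hyperedge size is $r=\max_{e\in E}|e|$. A clustering is a map $Y:V\to C$. For $e\in E$, $m_Y(e)=1$ if $Y[i]\neq\ell(e)$ for some $i\in e$, and $m_Y(e)=0$ otherwise; $\mathrm{CatEdgeClus}(Y)=\sum_{e\in E}m_Y(e)$. *)

theory Defs
  imports Complex_Main "HOL-Library.FuncSet" "HOL-Combinatorics.Permutations"
begin

text \<open>Edge-labeled hypergraph: node set V, hyperedges indexed by a finite set E
  (hedge e is the node set of hyperedge e, so repeated hyperedges are allowed),
  categories C = {1..k}, labeling lab.\<close>

definition hypergraph ::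
  "'v set \<Rightarrow> 'e set \<Rightarrow> ('e \<Rightarrow> 'v set) \<Rightarrow> nat \<Rightarrow> ('e \<Rightarrow> nat) \<Rightarrow> bool" where
  "hypergraph V E hedge k lab \<longleftrightarrow> finite V \<and> finite E \<and>
     (\<forall>e\<in>E. hedge e \<noteq> {} \<and> hedge e \<subseteq> V \<and> lab e \<in> {1..k})"

definition max_edge_size :: "'e set \<Rightarrow> ('e \<Rightarrow> 'v set) \<Rightarrow> nat" where
  "max_edge_size E hedge = Max ((\<lambda>e. card (hedge e)) ` E)"

definition cat_edge_clus ::
  "'e set \<Rightarrow> ('e \<Rightarrow> 'v set) \<Rightarrow> ('e \<Rightarrow> nat) \<Rightarrow> ('v \<Rightarrow> nat) \<Rightarrow> nat" where
  "cat_edge_clus E hedge lab Y = card {e \<in> E. \<exists>i\<in>hedge e. Y i \<noteq> lab e}"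

definition opt_clus ::
  "'v set \<Rightarrow> 'e set \<Rightarrow> ('e \<Rightarrow> 'v set) \<Rightarrow> nat \<Rightarrow> ('e \<Rightarrow> nat) \<Rightarrow> nat" where
  "opt_clus V E hedge k lab = Min ((\<lambda>Y. cat_edge_clus E hedge lab Y) ` (V \<rightarrow>\<^sub>E {1..k}))"

definition lp_feasible ::
  "'v set \<Rightarrow> 'e set \<Rightarrow> ('e \<Rightarrow> 'v set) \<Rightarrow> nat \<Rightarrow> ('e \<Rightarrow> nat)
   \<Rightarrow> ('v \<Rightarrow> nat \<Rightarrow> real) \<Rightarrow> ('e \<Rightarrow> real) \<Rightarrow> bool" where
  "lp_feasible V E hedge k lab xv xe \<longleftrightarrow>
     (\<forall>v\<in>V. (\<Sum>c=1..k. xv v c) = real k - 1) \<and>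
     (\<forall>e\<in>E. \<forall>v\<in>hedge e. xv v (lab e) \<le> xe e) \<and>
     (\<forall>v\<in>V. \<forall>c\<in>{1..k}. 0 \<le> xv v c \<and> xv v c \<le> 1) \<and>
     (\<forall>e\<in>E. 0 \<le> xe e \<and> xe e \<le> 1)"

definition lp_optimal ::
  "'v set \<Rightarrow> 'e set \<Rightarrow> ('e \<Rightarrow> 'v set) \<Rightarrow> nat \<Rightarrow> ('e \<Rightarrow> nat)
   \<Rightarrow> ('v \<Rightarrow> nat \<Rightarrow> real) \<Rightarrow> ('e \<Rightarrow> real) \<Rightarrow> bool" where
  "lp_optimal V E hedge k lab xv xe \<longleftrightarrow> lp_feasible V E hedge k lab xv xe \<and>
     (\<forall>yv ye. lp_feasible V E hedge k lab yv ye \<longrightarrow> (\<Sum>e\<in>E. xe e) \<le> (\<Sum>e\<in>E. ye e))"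

text \<open>A priority order is a permutation p of {1..k}; category c has
  higher priority than c' iff p c < p c'. A node in some S_c
  goes to the highest-priority such c; otherwise it gets the arbitrary category
  dflt p v (allowed to depend on the permutation).\<close>
definition round_clus ::
  "nat \<Rightarrow> ('v \<Rightarrow> nat \<Rightarrow> real) \<Rightarrow> real \<Rightarrow> (nat \<Rightarrow> nat) \<Rightarrow> ((nat \<Rightarrow> nat) \<Rightarrow> 'v \<Rightarrow> nat)
   \<Rightarrow> 'v \<Rightarrow> nat" where
  "round_clus k xv t p dflt v =
     (let S = {c\<in>{1..k}. xv v c < t} in
      if S = {} then dflt p v
      else (THE c. c \<in> S \<and> (\<forall>c'\<in>S. p c \<le> p c')))"

definition expected_cost ::
  "'e set \<Rightarrow> ('e \<Rightarrow> 'v set) \<Rightarrow> nat \<Rightarrow> ('e \<Rightarrow> nat) \<Rightarrow> ('v \<Rightarrow> nat \<Rightarrow> real) \<Rightarrow> real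
   \<Rightarrow> ((nat \<Rightarrow> nat) \<Rightarrow> 'v \<Rightarrow> nat) \<Rightarrow> real" where
  "expected_cost E hedge k lab xv t dflt =
     (\<Sum>p\<in>{p. p permutes {1..k}}.
        real (cat_edge_clus E hedge lab (round_clus k xv t p dflt)))
     / real (card {p. p permutes {1..k}})"

end

theory Submission
  imports Defs
begin


lemma perm_min_card_le:
  fixes S A :: "nat set"
  assumes "finite S" "A \<subseteq> S" "a \<in> A" "b \<in> A"
  shows "card {p. p permutes S \<and> (\<forall>a'\<in>A. a' \<noteq> a \<longrightarrow> p a < p a')}
       \<le> card {p. p permutes S \<and> (\<forall>a'\<in>A. a' \<noteq> b \<longrightarrow> p b < p a')}"
proof -
  let ?P = "\<lambda>a. {p. p permutes S \<and> (\<forall>a'\<in>A. a' \<noteq> a \<longrightarrow> p a < p a')}"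
  let ?f = "\<lambda>p. p \<circ> transpose a b"
  have inj: "inj_on ?f (?P a)"
  proof (rule inj_onI)
    fix p q assume "p \<circ> transpose a b = q \<circ> transpose a b"
    then have "p \<circ> transpose a b \<circ> transpose a b = q \<circ> transpose a b \<circ> transpose a b" by simp
    then show "p = q" by (simp add: o_assoc[symmetric])
  qed
  have sub: "?f ` ?P a \<subseteq> ?P b"
  proof
    fix q assume "q \<in> ?f ` ?P a"
    then obtain p where p: "p \<in> ?P a" and q: "q = p \<circ> transpose a b" by blast
    have "a \<in> S" "b \<in> S" using assms by auto
    then have "transpose a b permutes S" by (rule permutes_swap_id)
    moreover have "p permutes S" using p by simp
    ultimately have "q permutes S" unfolding q by (rule permutes_compose)
    moreover have "\<forall>a'\<in>A. a' \<noteq> b \<longrightarrow> q b < q a'"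
    proof (intro ballI impI)
      fix a' assume a': "a' \<in> A" "a' \<noteq> b"
      show "q b < q a'"
      proof (cases "a' = a")
        case True then show ?thesis using p q a' assms by (simp add: transpose_def)
      next
        case False then show ?thesis using p q a' assms by (simp add: transpose_def)
      qed
    qed
    ultimately show "q \<in> ?P b" by blast
  qed
  have fin: "finite (?P b)" using finite_permutations[OF assms(1)] by (rule rev_finite_subset) auto
  show ?thesis using card_inj_on_le[OF inj sub fin] .
qed

lemma perm_min_card:
  fixes S A :: "nat set"
  assumes "finite S" "A \<subseteq> S" "c \<in> A"
  shows "card {p. p permutes S \<and> (\<forall>a'\<in>A. a' \<noteq> c \<longrightarrow> p c < p a')} * card A
       = card {p. p permutes S}"
proof -
  let ?P = "\<lambda>a. {p. p permutes S \<and> (\<forall>a'\<in>A. a' \<noteq> a \<longrightarrow> p a < p a')}"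
  have finA: "finite A" using assms finite_subset by blast
  have eq: "card (?P a) = card (?P c)" if "a \<in> A" for a
    using perm_min_card_le[OF assms(1,2) that assms(3)] perm_min_card_le[OF assms(1,2) assms(3) that]
    by simp
  have fin: "finite (?P a)" for a using finite_permutations[OF assms(1)] by (rule rev_finite_subset) auto
  have cover: "{p. p permutes S} = (\<Union>a\<in>A. ?P a)"
  proof
    show "(\<Union>a\<in>A. ?P a) \<subseteq> {p. p permutes S}" by auto
    show "{p. p permutes S} \<subseteq> (\<Union>a\<in>A. ?P a)"
    proof
      fix p assume "p \<in> {p. p permutes S}"
      then have p: "p permutes S" by simp
      have "A \<noteq> {}" using assms by blast
      then have "Min (p ` A) \<in> p ` A" using finA by simp
      then obtain a where a0: "a \<in> A" "p a = Min (p ` A)" by auto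
      then have a: "a \<in> A" "\<forall>a'\<in>A. p a \<le> p a'" using finA by auto
      have "inj p" using p permutes_inj by blast
      then have "\<forall>a'\<in>A. a' \<noteq> a \<longrightarrow> p a < p a'" using a by (metis injD order_le_less)
      then show "p \<in> (\<Union>a\<in>A. ?P a)" using a p by blast
    qed
  qed
  have disj: "\<forall>a\<in>A. \<forall>b\<in>A. a \<noteq> b \<longrightarrow> ?P a \<inter> ?P b = {}"
  proof (intro ballI impI)
    fix a b assume "a \<in> A" "b \<in> A" "a \<noteq> b"
    show "?P a \<inter> ?P b = {}"
    proof (rule ccontr)
      assume "?P a \<inter> ?P b \<noteq> {}"
      then obtain p where "p \<in> ?P a" "p \<in> ?P b" by blast
      then have "p a < p b" "p b < p a" using \<open>a \<in> A\<close> \<open>b \<in> A\<close> \<open>a \<noteq> b\<close> by auto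
      then show False by simp
    qed
  qed
  have "card {p. p permutes S} = (\<Sum>a\<in>A. card (?P a))"
    unfolding cover by (rule card_UN_disjoint[OF finA]) (use fin disj in auto)
  also have "\<dots> = (\<Sum>a\<in>A. card (?P c))" using eq by (rule sum.cong[OF refl])
  finally show ?thesis by simp
qed

lemma round_good:
  assumes "p permutes {1..k}" "c \<in> {1..k}" "xv v c < t"
    "\<forall>c'\<in>{1..k}. c' \<noteq> c \<and> xv v c' < t \<longrightarrow> p c < p c'"
  shows "round_clus k xv t p dflt v = c"
proof -
  let ?S = "{c\<in>{1..k}. xv v c < t}"
  have cS: "c \<in> ?S" using assms by simp
  have "(THE c. c \<in> ?S \<and> (\<forall>c'\<in>?S. p c \<le> p c')) = c"
  proof (rule the_equality)
    show "c \<in> ?S \<and> (\<forall>c'\<in>?S. p c \<le> p c')" using cS assms(4) by (auto simp: order_le_less)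
  next
    fix c2 assume h: "c2 \<in> ?S \<and> (\<forall>c'\<in>?S. p c2 \<le> p c')"
    show "c2 = c"
    proof (rule ccontr)
      assume "c2 \<noteq> c"
      then have "p c < p c2" using h assms(4) by auto
      moreover have "p c2 \<le> p c" using h cS by blast
      ultimately show False by simp
    qed
  qed
  then show ?thesis using cS unfolding round_clus_def Let_def by auto
qed

lemma slack:
  assumes "lp_feasible V E hedge k lab xv xe" "v \<in> V" "c \<in> {1..k}" "D \<subseteq> {1..k} - {c}"
  shows "(\<Sum>d\<in>D. 1 - xv v d) \<le> xv v c"
proof -
  have F: "(\<Sum>c=1..k. xv v c) = real k - 1" "\<forall>c\<in>{1..k}. 0 \<le> xv v c \<and> xv v c \<le> 1"
    using assms(1,2) unfolding lp_feasible_def by auto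
  have "(\<Sum>d\<in>{1..k}. 1 - xv v d) = real k - (real k - 1)"
    using F(1) by (simp add: sum_subtractf)
  also have "(\<Sum>d\<in>{1..k}. 1 - xv v d) = (1 - xv v c) + (\<Sum>d\<in>{1..k} - {c}. 1 - xv v d)"
    using assms(3) by (simp add: sum.remove)
  finally have e: "(\<Sum>d\<in>{1..k} - {c}. 1 - xv v d) = xv v c" by simp
  have "(\<Sum>d\<in>D. 1 - xv v d) \<le> (\<Sum>d\<in>{1..k} - {c}. 1 - xv v d)"
    by (rule sum_mono2) (use assms(4) F(2) in auto)
  then show ?thesis using e by simp
qed

lemma count_if: "finite A \<Longrightarrow> (\<Sum>x\<in>A. if P x then 1 else 0) = real (card {x\<in>A. P x})"
  by (simp add: sum.inter_filter[symmetric])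

lemma opt_lb:
  assumes H: "hypergraph V E hedge k lab" and k: "k \<ge> 1" and O: "lp_optimal V E hedge k lab xv xe"
  shows "(\<Sum>e\<in>E. xe e) \<le> real (opt_clus V E hedge k lab)"
proof -
  let ?F = "V \<rightarrow>\<^sub>E {1..k}"
  have finV: "finite V" "finite E" using H unfolding hypergraph_def by auto
  have finF: "finite ?F" using finV by (simp add: finite_PiE)
  have "(\<lambda>v. if v \<in> V then 1 else undefined) \<in> ?F" using k by auto
  then have neF: "?F \<noteq> {}" by blast
  have "opt_clus V E hedge k lab \<in> (\<lambda>Y. cat_edge_clus E hedge lab Y) ` ?F"
    unfolding opt_clus_def using finF neF by (intro Min_in) auto
  then obtain Y where Y: "Y \<in> ?F" "opt_clus V E hedge k lab = cat_edge_clus E hedge lab Y" by blast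
  define yv where "yv = (\<lambda>v c. if Y v = c then 0 else (1::real))"
  define ye where "ye = (\<lambda>e. if (\<exists>i\<in>hedge e. Y i \<noteq> lab e) then 1 else (0::real))"
  have feas: "lp_feasible V E hedge k lab yv ye"
    unfolding lp_feasible_def
  proof (intro conjI ballI)
    fix v assume v: "v \<in> V"
    then have Yv: "Y v \<in> {1..k}" using Y by auto
    have "(\<Sum>c=1..k. yv v c) = yv v (Y v) + (\<Sum>c\<in>{1..k} - {Y v}. yv v c)"
      using Yv by (simp add: sum.remove)
    also have "(\<Sum>c\<in>{1..k} - {Y v}. yv v c) = (\<Sum>c\<in>{1..k} - {Y v}. 1)"
      by (rule sum.cong) (auto simp: yv_def)
    also have "\<dots> = real k - 1" using Yv by (simp add: card_Diff_singleton of_nat_diff)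
    finally show "(\<Sum>c=1..k. yv v c) = real k - 1" by (simp add: yv_def)
  next
    fix e v assume "e \<in> E" "v \<in> hedge e"
    then show "yv v (lab e) \<le> ye e" by (auto simp: yv_def ye_def)
  qed (auto simp: yv_def ye_def)
  then have "(\<Sum>e\<in>E. xe e) \<le> (\<Sum>e\<in>E. ye e)" using O unfolding lp_optimal_def by blast
  also have "(\<Sum>e\<in>E. ye e) = real (cat_edge_clus E hedge lab Y)"
    unfolding ye_def cat_edge_clus_def by (rule count_if[OF finV(2)])
  finally show ?thesis using Y by simp
qed

lemma frac_mono: "(m::nat) \<le> B \<Longrightarrow> real m / (real m + 1) \<le> real B / (real B + 1)"
proof -
  assume h: "m \<le> B"
  have "real m * (real B + 1) \<le> real B * (real m + 1)" using h by (simp add: algebra_simps)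
  then show ?thesis by (simp add: divide_simps)
qed

lemma general:
  assumes H: "hypergraph V E hedge k lab" and k: "k \<ge> 1"
    and O: "lp_optimal V E hedge k lab xv xe"
    and al: "\<alpha> \<ge> 0" "\<alpha> * t \<ge> 1"
    and bnd: "\<forall>e\<in>E. xe e < t \<longrightarrow>
       card {c'\<in>{1..k}. c' \<noteq> lab e \<and> (\<exists>v\<in>hedge e. xv v c' < t)} \<le> B"
    and ratio: "real B / (real B + 1) \<le> \<alpha> * (1 - t)"
  shows "expected_cost E hedge k lab xv t dflt \<le> \<alpha> * real (opt_clus V E hedge k lab)"
proof -
  define Perms where "Perms = {p. p permutes {1..k::nat}}"
  define N where "N = card Perms"
  define bad where "bad = (\<lambda>e p. \<exists>i\<in>hedge e. round_clus k xv t p dflt i \<noteq> lab e)"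
  have finP: "finite Perms" unfolding Perms_def by (rule finite_permutations) simp
  have "id \<in> Perms" unfolding Perms_def by (simp add: permutes_id)
  then have Npos: "N > 0" unfolding N_def using finP card_gt_0_iff by blast
  have finV: "finite V" "finite E" using H unfolding hypergraph_def by auto
  have F: "lp_feasible V E hedge k lab xv xe" using O unfolding lp_optimal_def by blast
  have edge: "real (card {p\<in>Perms. bad e p}) \<le> \<alpha> * xe e * real N" if e: "e \<in> E" for e
  proof -
    define c where "c = lab e"
    have c: "c \<in> {1..k}" and eV: "hedge e \<subseteq> V" using H e unfolding hypergraph_def c_def by auto
    have xe0: "0 \<le> xe e" using F e unfolding lp_feasible_def by auto
    have xvc: "\<forall>v\<in>hedge e. xv v c \<le> xe e" using F e unfolding lp_feasible_def c_def by auto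
    show ?thesis
    proof (cases "xe e \<ge> t")
      case True
      have "card {p\<in>Perms. bad e p} \<le> N" unfolding N_def by (rule card_mono[OF finP]) auto
      moreover have "\<alpha> * t \<le> \<alpha> * xe e" using True al by (simp add: mult_left_mono)
      then have "1 \<le> \<alpha> * xe e" using al by linarith
      ultimately have "real (card {p\<in>Perms. bad e p}) \<le> 1 * real N" by simp
      also have "\<dots> \<le> \<alpha> * xe e * real N" using \<open>1 \<le> \<alpha> * xe e\<close> by (intro mult_right_mono) auto
      finally show ?thesis .
    next
      case False
      then have lt: "xe e < t" by simp
      define T where "T = {c'\<in>{1..k}. c' \<noteq> c \<and> (\<exists>v\<in>hedge e. xv v c' < t)}"
      define A where "A = insert c T"
      define Pc where "Pc = {p. p permutes {1..k} \<and> (\<forall>a'\<in>A. a' \<noteq> c \<longrightarrow> p c < p a')}"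
      have TB: "card T \<le> B" using bnd e lt unfolding T_def c_def by blast
      have finT: "finite T" unfolding T_def by simp
      have cT: "c \<notin> T" unfolding T_def by simp
      have cardA: "card A = card T + 1" unfolding A_def using finT cT by simp
      have AS: "A \<subseteq> {1..k}" unfolding A_def T_def using c by auto
      have cnt: "card Pc * card A = N"
        unfolding Pc_def N_def Perms_def by (rule perm_min_card) (use AS in \<open>auto simp: A_def\<close>)
      have PcP: "Pc \<subseteq> Perms" unfolding Pc_def Perms_def by auto
      have sub: "{p\<in>Perms. bad e p} \<subseteq> Perms - Pc"
      proof
        fix p assume p: "p \<in> {p\<in>Perms. bad e p}"
        show "p \<in> Perms - Pc"
        proof (rule ccontr)
          assume "p \<notin> Perms - Pc"
          then have pPc: "p \<in> Pc" using p by blast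
          have "round_clus k xv t p dflt i = c" if i: "i \<in> hedge e" for i
          proof (rule round_good)
            show "p permutes {1..k}" using pPc unfolding Pc_def by blast
            show "c \<in> {1..k}" by (rule c)
            show "xv i c < t" using xvc i lt by force
            show "\<forall>c'\<in>{1..k}. c' \<noteq> c \<and> xv i c' < t \<longrightarrow> p c < p c'"
            proof (intro ballI impI)
              fix c' assume "c' \<in> {1..k}" "c' \<noteq> c \<and> xv i c' < t"
              then have "c' \<in> A" unfolding A_def T_def using i by blast
              then show "p c < p c'" using pPc \<open>c' \<noteq> c \<and> xv i c' < t\<close> unfolding Pc_def by blast
            qed
          qed
          then show False using p unfolding bad_def c_def by auto
        qed
      qed
      have "card {p\<in>Perms. bad e p} \<le> card (Perms - Pc)"
        by (rule card_mono) (use finP sub in auto)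
      also have "card (Perms - Pc) = N - card Pc"
        unfolding N_def by (rule card_Diff_subset) (use PcP finP finite_subset in auto)
      finally have c0: "card {p\<in>Perms. bad e p} \<le> N - card Pc" .
      have "card Pc \<le> N" unfolding N_def using PcP finP by (rule card_mono[rotated])
      then have "real (N - card Pc) = real N - real (card Pc)" by (rule of_nat_diff)
      moreover have "real (card {p\<in>Perms. bad e p}) \<le> real (N - card Pc)" using c0 by simp
      ultimately have c1: "real (card {p\<in>Perms. bad e p}) \<le> real N - real (card Pc)" by simp
      have "real (card Pc) = real N / (real (card T) + 1)"
        using cnt cardA by (simp add: field_simps flip: of_nat_mult)
      then have "real N - real (card Pc) = real N * (real (card T) / (real (card T) + 1))"
        by (simp add: field_simps)
      then have c2: "real (card {p\<in>Perms. bad e p}) \<le> real N * (real (card T) / (real (card T) + 1))"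
        using c1 by simp
      show ?thesis
      proof (cases "T = {}")
        case True
        then have "real (card {p\<in>Perms. bad e p}) \<le> 0" using c2 by simp
        also have "0 \<le> \<alpha> * xe e * real N" using al xe0 by simp
        finally show ?thesis .
      next
        case False
        then obtain c' v where cv: "c' \<in> {1..k}" "c' \<noteq> c" "v \<in> hedge e" "xv v c' < t"
          unfolding T_def by blast
        have "(\<Sum>d\<in>{c'}. 1 - xv v d) \<le> xv v c"
          by (rule slack[OF F]) (use cv eV c in auto)
        then have "1 - t < xe e" using cv xvc by fastforce
        have "real (card T) / (real (card T) + 1) \<le> \<alpha> * (1 - t)"
          using frac_mono[OF TB] ratio by linarith
        also have "\<dots> \<le> \<alpha> * xe e" using al \<open>1 - t < xe e\<close> by (intro mult_left_mono) auto
        finally have "real N * (real (card T) / (real (card T) + 1)) \<le> real N * (\<alpha> * xe e)"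
          by (intro mult_left_mono) auto
        then show ?thesis using c2 by (simp add: mult.commute mult.left_commute)
      qed
    qed
  qed
  have "(\<Sum>p\<in>Perms. real (cat_edge_clus E hedge lab (round_clus k xv t p dflt)))
      = (\<Sum>p\<in>Perms. \<Sum>e\<in>E. if bad e p then 1 else 0)"
    unfolding cat_edge_clus_def bad_def using count_if[OF finV(2)] by simp
  also have "\<dots> = (\<Sum>e\<in>E. \<Sum>p\<in>Perms. if bad e p then 1 else 0)" by (rule sum.swap)
  also have "\<dots> = (\<Sum>e\<in>E. real (card {p\<in>Perms. bad e p}))" using count_if[OF finP] by simp
  also have "\<dots> \<le> (\<Sum>e\<in>E. \<alpha> * xe e * real N)" by (rule sum_mono) (rule edge)
  also have "\<dots> = \<alpha> * (\<Sum>e\<in>E. xe e) * real N" by (simp add: sum_distrib_left sum_distrib_right)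
  also have "\<dots> \<le> \<alpha> * real (opt_clus V E hedge k lab) * real N"
    using opt_lb[OF H k O] al by (intro mult_right_mono mult_left_mono) auto
  finally have S: "(\<Sum>p\<in>Perms. real (cat_edge_clus E hedge lab (round_clus k xv t p dflt)))
      \<le> \<alpha> * real (opt_clus V E hedge k lab) * real N" .
  show ?thesis unfolding expected_cost_def
    using S Npos unfolding Perms_def N_def by (simp add: divide_simps)
qed

theorem mainTheorem6:
  fixes V :: "'v set" and E :: "'e set" and hedge :: "'e \<Rightarrow> 'v set"
    and k :: nat and lab :: "'e \<Rightarrow> nat"
    and xv :: "'v \<Rightarrow> nat \<Rightarrow> real" and xe :: "'e \<Rightarrow> real"
    and dflt :: "(nat \<Rightarrow> nat) \<Rightarrow> 'v \<Rightarrow> nat"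
  assumes "hypergraph V E hedge k lab"
    and "k \<ge> 2"
    and "max_edge_size E hedge \<ge> 2"
    and "lp_optimal V E hedge k lab xv xe"
    and "\<forall>p v. dflt p v \<in> {1..k}"
  shows "(expected_cost E hedge k lab xv (real k / (2 * real k - 1)) dflt
           \<le> (2 - 1 / real k) * real (opt_clus V E hedge k lab)) \<and>
         (expected_cost E hedge k lab xv
           ((real (max_edge_size E hedge) + 1) / (2 * real (max_edge_size E hedge) + 1)) dflt
           \<le> (2 - 1 / (real (max_edge_size E hedge) + 1)) * real (opt_clus V E hedge k lab))"
proof
  have H: "hypergraph V E hedge k lab" and k1: "k \<ge> 1" and O: "lp_optimal V E hedge k lab xv xe"
    using assms by auto
  have F: "lp_feasible V E hedge k lab xv xe" using O unfolding lp_optimal_def by blast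
  have finV: "finite V" "finite E" using H unfolding hypergraph_def by auto
  have kr: "real k \<ge> 2" using assms(2) by simp
  show "expected_cost E hedge k lab xv (real k / (2 * real k - 1)) dflt
           \<le> (2 - 1 / real k) * real (opt_clus V E hedge k lab)"
  proof (rule general[OF H k1 O, where B = "k - 1"])
    show "0 \<le> 2 - 1 / real k" using kr by (simp add: field_simps)
    show "1 \<le> (2 - 1 / real k) * (real k / (2 * real k - 1))" using kr by (simp add: field_simps)
    show "real (k - 1) / (real (k - 1) + 1) \<le> (2 - 1 / real k) * (1 - real k / (2 * real k - 1))"
      using kr k1 by (simp add: of_nat_diff field_simps)
    show "\<forall>e\<in>E. xe e < real k / (2 * real k - 1) \<longrightarrow>
       card {c'\<in>{1..k}. c' \<noteq> lab e \<and> (\<exists>v\<in>hedge e. xv v c' < real k / (2 * real k - 1))} \<le> k - 1"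
    proof (intro ballI impI)
      fix e assume e: "e \<in> E"
      then have le: "lab e \<in> {1..k}" using H unfolding hypergraph_def by auto
      have "card {c'\<in>{1..k}. c' \<noteq> lab e \<and> (\<exists>v\<in>hedge e. xv v c' < real k / (2 * real k - 1))}
          \<le> card ({1..k} - {lab e})" by (rule card_mono) auto
      also have "\<dots> = k - 1" using le by simp
      finally show "card {c'\<in>{1..k}. c' \<noteq> lab e \<and> (\<exists>v\<in>hedge e. xv v c' < real k / (2 * real k - 1))} \<le> k - 1" .
    qed
  qed
  define r where "r = max_edge_size E hedge"
  have r2: "r \<ge> 2" using assms(3) r_def by simp
  then have rr: "real r \<ge> 2" by simp
  define t where "t = (real r + 1) / (2 * real r + 1)"
  have t23: "3 * t \<le> 2" using rr unfolding t_def by (simp add: field_simps)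
  have "expected_cost E hedge k lab xv t dflt \<le> (2 - 1 / (real r + 1)) * real (opt_clus V E hedge k lab)"
  proof (rule general[OF H k1 O, where B = r])
    show "0 \<le> 2 - 1 / (real r + 1)" using rr by (simp add: field_simps)
    show "1 \<le> (2 - 1 / (real r + 1)) * t"
    proof -
      have "0 \<le> real r * 3 + real r * (real r * 2)" by simp
      then have "1 + (real r * 3 + real r * (real r * 2)) \<noteq> 0" by linarith
      then show ?thesis using rr unfolding t_def by (simp add: field_simps)
    qed
    show "real r / (real r + 1) \<le> (2 - 1 / (real r + 1)) * (1 - t)"
    proof -
      have "0 \<le> real r * 3 + real r * (real r * 2)" by simp
      then have "1 + (real r * 3 + real r * (real r * 2)) \<noteq> 0" by linarith
      then have "(2 - 1 / (real r + 1)) * (1 - t) = real r / (real r + 1)"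
        using rr unfolding t_def by (simp add: field_simps)
      then show ?thesis by simp
    qed
    show "\<forall>e\<in>E. xe e < t \<longrightarrow>
       card {c'\<in>{1..k}. c' \<noteq> lab e \<and> (\<exists>v\<in>hedge e. xv v c' < t)} \<le> r"
    proof (intro ballI impI)
      fix e assume e: "e \<in> E" and lt: "xe e < t"
      have le: "lab e \<in> {1..k}" and eV: "hedge e \<subseteq> V" using H e unfolding hypergraph_def by auto
      have fe: "finite (hedge e)" using eV finV finite_subset by blast
      have xvc: "\<forall>v\<in>hedge e. xv v (lab e) \<le> xe e" using F e unfolding lp_feasible_def by auto
      define Th where "Th = (\<lambda>v. {c'\<in>{1..k}. c' \<noteq> lab e \<and> xv v c' < t})"
      have Th1: "card (Th v) \<le> 1" if v: "v \<in> hedge e" for v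
      proof -
        have "\<forall>a1\<in>Th v. \<forall>a2\<in>Th v. a1 = a2"
        proof (intro ballI, rule ccontr)
          fix a1 a2 assume a: "a1 \<in> Th v" "a2 \<in> Th v" "a1 \<noteq> a2"
          have "(\<Sum>d\<in>{a1, a2}. 1 - xv v d) \<le> xv v (lab e)"
            by (rule slack[OF F]) (use a v eV le in \<open>auto simp: Th_def\<close>)
          then have "(1 - xv v a1) + (1 - xv v a2) \<le> xe e" using a(3) xvc v by fastforce
          moreover have "xv v a1 < t" "xv v a2 < t" using a unfolding Th_def by auto
          ultimately show False using lt t23 by linarith
        qed
        then show ?thesis using card_le_Suc0_iff_eq[of "Th v"] unfolding Th_def by simp
      qed
      have "card {c'\<in>{1..k}. c' \<noteq> lab e \<and> (\<exists>v\<in>hedge e. xv v c' < t)} \<le> card (\<Union>v\<in>hedge e. Th v)"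
        by (rule card_mono) (use fe in \<open>auto simp: Th_def\<close>)
      also have "\<dots> \<le> (\<Sum>v\<in>hedge e. card (Th v))" by (rule card_UN_le[OF fe])
      also have "\<dots> \<le> (\<Sum>v\<in>hedge e. 1)" by (rule sum_mono) (rule Th1)
      also have "\<dots> = card (hedge e)" by simp
      also have "\<dots> \<le> r" unfolding r_def max_edge_size_def using finV e by (intro Max_ge) auto
      finally show "card {c'\<in>{1..k}. c' \<noteq> lab e \<and> (\<exists>v\<in>hedge e. xv v c' < t)} \<le> r" .
    qed
  qed
  then show "expected_cost E hedge k lab xv
           ((real (max_edge_size E hedge) + 1) / (2 * real (max_edge_size E hedge) + 1)) dflt
           \<le> (2 - 1 / (real (max_edge_size E hedge) + 1)) * real (opt_clus V E hedge k lab)"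
    unfolding t_def r_def .
qed

end
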